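(* Let $q=2^{4n+2}$ with $n\ge0$ an integer. Then there exists a linear code over $\mathbb{F}_q$ with parameters $[(\sqrt q-1)(q+1),5,d]_q$ where $d\ge (\sqrt q-1)(q+1)-(2q+2+20\sqrt q)=(\sqrt q-3)q-19\sqrt q-3$. Specifically, with $\xi\in\mathbb{F}_q$ a root of $T^2+T+1$, $\Omega^*=\bigcup_{z\in\mathbb{F}_{\sqrt q}^*}\{(x,y)\in AG(2,q): x^2+xy+\xi y^2=z\}$ and $\mathcal{V}=\langle X,Y,X^2,XY,Y^2\rangle_{\mathbb{F}_q}$, the functional code $\mathcal{C}_{\mathcal{V}}(\Omega^* )$ has these parameters. *)

theory Defs
  imports "HOL-Library.Cardinality"
begin

definition subfield_of_order :: "nat \<Rightarrow> 'a::field set" where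
  "subfield_of_order s = {z. z ^ s = z}"

definition Omega_star :: "nat \<Rightarrow> 'a::field \<Rightarrow> ('a \<times> 'a) set" where
  "Omega_star s xi =
     (\<Union>z\<in>subfield_of_order s - {0}. {(x, y). x^2 + x*y + xi*y^2 = z})"

definition functional_code :: "('a::field \<times> 'a) set \<Rightarrow> ('a \<times> 'a \<Rightarrow> 'a) set" where
  "functional_code \<Omega> =
     {(\<lambda>P. if P \<in> \<Omega> then
              a1 * fst P + a2 * snd P + a3 * (fst P)^2 + a4 * (fst P * snd P) + a5 * (snd P)^2
            else 0) | a1 a2 a3 a4 a5. True}"

definition hweight :: "('a \<times> 'a) set \<Rightarrow> ('a \<times> 'a \<Rightarrow> 'a::zero) \<Rightarrow> nat" where
  "hweight \<Omega> w = card {P \<in> \<Omega>. w P \<noteq> 0}"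

definition min_distance :: "('a \<times> 'a) set \<Rightarrow> ('a \<times> 'a \<Rightarrow> 'a::zero) set \<Rightarrow> nat" where
  "min_distance \<Omega> C = Min (hweight \<Omega> ` (C - {\<lambda>_. 0}))"

end

theory Submission imports Defs "HOL-Number_Theory.Residues" "HOL-Computational_Algebra.Polynomial" begin

lemma char2:
  assumes "CARD('a::{finite,field}) = 2 ^ m"
  shows "(2::'a) = 0"
proof -
  have pos: "CHAR('a) > 0" by (simp add: finite_imp_CHAR_pos)
  have pr: "prime CHAR('a)" using pos prime_CHAR_semidom by blast
  have "CHAR('a) dvd 2 ^ m" using CHAR_dvd_CARD[where 'a='a] assms by simp
  hence "CHAR('a) dvd 2" using pr prime_dvd_power_nat by blast
  hence "CHAR('a) = 1 \<or> CHAR('a) = 2" using two_is_prime_nat prime_nat_iff by blast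
  hence "CHAR('a) = 2" using pr not_prime_1 by auto
  hence "of_nat 2 = (0::'a)" by (metis of_nat_CHAR)
  thus ?thesis by simp
qed

lemma c2_add_self: "(2::'a::field) = 0 \<Longrightarrow> x + x = (0::'a)"
  by (metis mult_2 mult_zero_left)

lemma c2_minus: "(2::'a::field) = 0 \<Longrightarrow> - x = (x::'a)"
  by (metis c2_add_self add_eq_0_iff)

lemma c2_diff: "(2::'a::field) = 0 \<Longrightarrow> a - b = a + (b::'a)"
  by (metis c2_minus diff_conv_add_uminus)

lemma c2_sq: "(2::'a::field) = 0 \<Longrightarrow> (a + b)^2 = a^2 + (b::'a)^2"
  by (simp add: power2_sum)

lemma c2_pow2k: "(2::'a::field) = 0 \<Longrightarrow> (a + b)^(2^k) = a^(2^k) + (b::'a)^(2^k)"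
proof (induction k)
  case 0 then show ?case by simp
next
  case (Suc k)
  have "(a + b)^(2^Suc k) = ((a+b)^(2^k))^2" by (simp add: power_mult[symmetric] mult.commute)
  also have "\<dots> = (a^(2^k) + b^(2^k))^2" using Suc by simp
  also have "\<dots> = (a^(2^k))^2 + (b^(2^k))^2" using c2_sq Suc.prems by blast
  also have "\<dots> = a^(2^Suc k) + b^(2^Suc k)" by (simp add: power_mult[symmetric] mult.commute)
  finally show ?case .
qed

lemma fermat_field:
  fixes x :: "'a :: {finite,field}"
  shows "x ^ CARD('a) = x"
proof (cases "x = 0")
  case False
  have "x * (\<Prod>y\<in>UNIV-{0}. x * y) = x * x ^ (card (UNIV :: 'a set) - 1) * \<Prod>(UNIV-{0})"
    by (simp add: prod.distrib mult_ac)
  also have "x * x ^ (card (UNIV :: 'a set) - 1) = x ^ Suc (card (UNIV :: 'a set) - 1)"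
    by (subst power_Suc) auto
  also have "Suc (card (UNIV :: 'a set) - 1) = card (UNIV :: 'a set)"
    using finite_UNIV_card_ge_0[where ?'a = 'a] by simp
  also have "(\<Prod>y\<in>UNIV-{0}. x * y) = (\<Prod>y\<in>UNIV-{0}. y)"
    by (rule prod.reindex_bij_witness[of _ "\<lambda>y. y / x" "\<lambda>y. x * y"]) (use False in auto)
  finally show ?thesis
    by simp
qed (use finite_UNIV_card_ge_0[where ?'a = 'a] in auto)

lemma sqrt_exists:
  assumes two: "(2::'a::{finite,field}) = 0"
  shows "\<exists>t. t^2 = (z::'a)"
proof -
  have "inj (\<lambda>t::'a. t^2)"
  proof (rule injI)
    fix t u :: 'a assume "t^2 = u^2"
    hence "(t + u)^2 = 0" using c2_sq[OF two, of t u] c2_add_self[OF two] by simp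
    hence "t + u = 0" by simp
    thus "t = u" using c2_minus[OF two] by (metis add_eq_0_iff)
  qed
  hence "surj (\<lambda>t::'a. t^2)" using finite_UNIV_inj_surj[of "\<lambda>t::'a. t^2"] by simp
  thus ?thesis by (metis surjD)
qed

lemma subfield_card:
  fixes dummy :: "'a::{finite,field}"
  assumes two: "(2::'a) = 0" and k: "k \<ge> 1" and q: "CARD('a) = 2^k * 2^k"
  shows "card {z::'a. z^(2^k) = z} = 2^k"
proof -
  define s :: nat where "s = 2^k"
  have "(2::nat)^1 \<le> 2^k" using k by (rule power_increasing) simp
  hence s2: "s \<ge> 2" unfolding s_def by simp
  define phi :: "'a \<Rightarrow> 'a" where "phi z = z^s + z" for z
  define K where "K = {z::'a. z^s = z}"
  have phi_add: "phi (a + b) = phi a + phi b" for a b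
    unfolding phi_def s_def using c2_pow2k[OF two, of a b k] by (simp add: algebra_simps)
  have K_eq: "K = {z. phi z = 0}"
    unfolding K_def phi_def using c2_minus[OF two] by (metis add_eq_0_iff)
  have cardK: "card K \<le> s"
  proof -
    define p :: "'a poly" where "p = monom 1 s + [:0,1:]"
    have pz: "poly p z = phi z" for z unfolding p_def phi_def by (simp add: poly_monom)
    obtain m where sm: "s = Suc (Suc m)" using s2 by (metis add_2_eq_Suc le_Suc_ex)
    have "coeff p s = 1" unfolding p_def sm by (simp add: coeff_monom)
    hence p0: "p \<noteq> 0" by auto
    have "degree p \<le> max (degree (monom (1::'a) s)) (degree [:0,1::'a:])"
      unfolding p_def by (rule degree_add_le_max)
    hence "degree p \<le> s" using s2 by (simp add: degree_monom_eq)
    moreover have "card {x. poly p x = 0} \<le> degree p" by (rule card_poly_roots_bound[OF p0])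
    ultimately show ?thesis unfolding K_eq pz by simp
  qed
  have ferm: "z ^ (s*s) = z" for z :: 'a using fermat_field[of z] q s_def by simp
  have phiK: "phi z \<in> K" for z
  proof -
    have "phi (phi z) = (z^s + z)^s + (z^s + z)" unfolding phi_def by simp
    also have "(z^s + z)^s = (z^s)^s + z^s" unfolding s_def using c2_pow2k[OF two] by blast
    also have "(z^s)^s = z" using ferm by (simp add: power_mult[symmetric])
    finally have "phi (phi z) = z + z^s + (z^s + z)" .
    also have "\<dots> = (z + z) + (z^s + z^s)" by (simp add: algebra_simps)
    finally show ?thesis unfolding K_eq using c2_add_self[OF two] by simp
  qed
  define r where "r w = (SOME z. phi z = w)" for w
  have r: "phi (r (phi z)) = phi z" for z unfolding r_def by (rule someI) auto
  define g where "g z = (phi z, z + r (phi z))" for z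
  have "inj g"
  proof (rule injI)
    fix a b assume "g a = g b"
    hence "phi a = phi b" "a + r (phi a) = b + r (phi b)" unfolding g_def by auto
    thus "a = b" by simp
  qed
  moreover have "range g \<subseteq> K \<times> K"
  proof
    fix w assume "w \<in> range g"
    then obtain z where w: "w = g z" by auto
    have "phi (z + r (phi z)) = 0" using phi_add r c2_add_self[OF two] by simp
    thus "w \<in> K \<times> K" unfolding w g_def using phiK K_eq by auto
  qed
  ultimately have "CARD('a) \<le> card (K \<times> K)"
    using card_image[of g UNIV] card_mono[of "K \<times> K" "range g"] by simp
  hence "s * s \<le> card K * card K" using q s_def by (simp add: card_cartesian_product)
  have "card K = s"
  proof (rule ccontr)
    assume "card K \<noteq> s"
    hence "card K < s" using cardK by simp
    hence "card K * card K < s * s" using s2 by (intro mult_strict_mono) auto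
    thus False using \<open>s * s \<le> card K * card K\<close> by simp
  qed
  thus ?thesis unfolding K_def s_def .
qed

lemma c2_pow4: "(2::'a::field) = 0 \<Longrightarrow> (a + b)^4 = a^4 + (b::'a)^4"
  using c2_pow2k[of a b 2] by simp

lemma aniso:
  fixes xi :: "'a::{finite,field}"
  assumes two: "(2::'a) = 0" and q: "CARD('a) = 2 ^ (4 * n + 2)"
    and xi: "xi^2 + xi + 1 = 0" and e: "x^2 + x*y + xi*y^2 = 0"
  shows "x = 0 \<and> y = 0"
proof (cases "y = 0")
  case True
  then show ?thesis using e by simp
next
  case False
  define t where "t = x / y"
  have "(t^2 + t + xi) * y^2 = x^2 + x*y + xi*y^2" unfolding t_def using False
    by (simp add: field_simps power2_eq_square)
  hence t0: "t^2 + t + xi = 0" using e False by simp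
  have t2: "t^2 = t + xi" using t0 c2_minus[OF two] by (metis add.assoc add_eq_0_iff)
  have x2: "xi^2 = xi + 1" using xi c2_minus[OF two] by (metis add.assoc add_eq_0_iff)
  have t4: "t^4 = t + 1"
  proof -
    have "t^4 = (t^2)^2" by simp
    also have "\<dots> = (t + xi)^2" using t2 by simp
    also have "\<dots> = t^2 + xi^2" using c2_sq[OF two] by simp
    also have "\<dots> = t + (xi + xi) + 1" unfolding t2 x2 by (simp add: algebra_simps)
    finally show ?thesis using c2_add_self[OF two] by simp
  qed
  have t16: "t^16 = t"
  proof -
    have "t^16 = (t^4)^4" by (simp flip: power_mult)
    also have "\<dots> = (t + 1)^4" using t4 by simp
    also have "\<dots> = t^4 + 1" using c2_pow4[OF two, of t 1] by simp
    also have "\<dots> = t + (1 + 1)" unfolding t4 by (simp add: algebra_simps)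
    finally show ?thesis using c2_add_self[OF two] by simp
  qed
  have ind: "t ^ (4 ^ (2*j+1)) = t + 1" for j
  proof (induction j)
    case 0 then show ?case using t4 by simp
  next
    case (Suc j)
    have "t ^ (4 ^ (2*Suc j+1)) = (t ^ (4 ^ (2*j+1))) ^ 16"
      by (simp flip: power_mult add: power_add mult.commute)
    also have "\<dots> = (t + 1)^16" using Suc by simp
    also have "\<dots> = t^16 + 1" using c2_pow2k[OF two, of t 1 4] by simp
    finally show ?case using t16 by simp
  qed
  have e1: "4*n+2 = 2*(2*n+1)" by simp
  have "(2::nat) ^ (4*n+2) = (2^2) ^ (2*n+1)" by (simp only: e1 power_mult)
  hence "(4::nat) ^ (2*n+1) = 2 ^ (4*n+2)" by simp
  hence "t ^ CARD('a) = t + 1" using ind[of n] q by simp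
  hence "t = t + 1" using fermat_field[of t] by simp
  thus ?thesis by simp
qed

lemma conic_card:
  fixes xi :: "'a::{finite,field}"
  assumes two: "(2::'a) = 0"
    and an: "\<And>x y. x^2 + x*y + xi*y^2 = 0 \<Longrightarrow> x = 0 \<and> y = 0"
    and z: "z \<noteq> 0"
  shows "card {(x, y). x^2 + x*y + xi*y^2 = z} = CARD('a) + 1"
proof -
  define C where "C w = {(x, y). x^2 + x*y + xi*y^2 = w}" for w :: 'a
  have scale: "card (C w) = card (C 1)" if w: "w \<noteq> 0" for w
  proof -
    obtain t where t: "t^2 = w" using sqrt_exists[OF two] by blast
    have t0: "t \<noteq> 0" using t w by auto
    define h where "h = (\<lambda>(x,y). (t*x, t*y :: 'a))"
    have "inj_on h (C 1)" unfolding h_def using t0 by (auto simp: inj_on_def)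
    moreover have "h ` C 1 = C w"
    proof
      show "h ` C 1 \<subseteq> C w"
      proof
        fix P assume "P \<in> h ` C 1"
        then obtain x y where P: "P = (t*x, t*y)" and "x^2 + x*y + xi*y^2 = 1"
          unfolding h_def C_def by auto
        hence "(t*x)^2 + (t*x)*(t*y) + xi*(t*y)^2 = t^2 * 1" by (metis (no_types) distrib_left mult.assoc mult.left_commute power2_eq_square power_mult_distrib)
        thus "P \<in> C w" unfolding P C_def using t by simp
      qed
    next
      show "C w \<subseteq> h ` C 1"
      proof
        fix P assume "P \<in> C w"
        then obtain x y where P: "P = (x, y)" and e: "x^2 + x*y + xi*y^2 = w"
          unfolding C_def by auto
        have "(x/t)^2 + (x/t)*(y/t) + xi*(y/t)^2 = (x^2 + x*y + xi*y^2) / t^2"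
          using t0 by (simp add: field_simps power2_eq_square)
        hence "(x/t, y/t) \<in> C 1" unfolding C_def using e t w by simp
        moreover have "P = h (x/t, y/t)" unfolding P h_def using t0 by simp
        ultimately show "P \<in> h ` C 1" by blast
      qed
    qed
    ultimately show ?thesis by (metis card_image)
  qed
  have U: "UNIV - {(0,0)} = (\<Union>w\<in>UNIV - {0}. C w)"
  proof
    show "UNIV - {(0,0)} \<subseteq> (\<Union>w\<in>UNIV - {0}. C w)"
    proof
      fix P :: "'a \<times> 'a" assume P: "P \<in> UNIV - {(0,0)}"
      obtain x y where xy: "P = (x,y)" by (cases P)
      have "x^2 + x*y + xi*y^2 \<noteq> 0" using an[of x y] P xy by auto
      thus "P \<in> (\<Union>w\<in>UNIV - {0}. C w)" unfolding C_def xy by blast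
    qed
  next
    show "(\<Union>w\<in>UNIV - {0}. C w) \<subseteq> UNIV - {(0,0)}" unfolding C_def by auto
  qed
  have disj: "\<forall>i\<in>UNIV - {0}. \<forall>j\<in>UNIV - {0}. i \<noteq> j \<longrightarrow> C i \<inter> C j = {}"
    unfolding C_def by blast
  have "card (\<Union>w\<in>UNIV - {0}. C w) = (\<Sum>w\<in>UNIV - {0}. card (C w))"
    by (rule card_UN_disjoint[OF _ _ disj]) simp_all
  moreover have "card (UNIV - {(0::'a,0::'a)}) = card (\<Union>w\<in>UNIV - {0}. C w)"
    by (rule arg_cong[OF U])
  ultimately have "card (UNIV - {(0::'a,0::'a)}) = (\<Sum>w\<in>UNIV - {0}. card (C w))"
    by (rule trans[rotated])
  also have "\<dots> = (\<Sum>w\<in>UNIV - {0::'a}. card (C 1))" by (rule sum.cong) (auto intro: scale)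
  also have "\<dots> = (CARD('a) - 1) * card (C 1)" by simp
  finally have eq: "(CARD('a) - 1) * card (C 1) = CARD('a) * CARD('a) - 1"
    by (simp add: card_cartesian_product)
  define q where "q = CARD('a)"
  have "card {0::'a, 1} \<le> CARD('a)" by (rule card_mono) auto
  hence q2: "q \<ge> 2" unfolding q_def by simp
  have qq: "q * q - 1 = (q - 1) * (q + 1)" using q2 by (cases q) auto
  have "(q - 1) * card (C 1) = (q - 1) * (q + 1)" using eq unfolding q_def[symmetric] qq .
  moreover have qn: "q - 1 \<noteq> 0" using q2 by simp
  ultimately have "card (C 1) = q + 1" by (simp only: mult_left_cancel[OF qn])
  thus ?thesis using scale[OF z] unfolding C_def q_def by simp
qed

definition fv :: "'a \<times> 'a \<times> 'a \<times> 'a \<times> 'a \<Rightarrow> 'a \<times> 'a \<Rightarrow> 'a::field" where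
  "fv a P = (case a of (a1,a2,a3,a4,a5) \<Rightarrow>
     a1 * fst P + a2 * snd P + a3 * (fst P)^2 + a4 * (fst P * snd P) + a5 * (snd P)^2)"

lemma fv_shift:
  assumes two: "(2::'a::field) = 0"
  shows "fv (a1,a2,a3,a4,a5) (x + y, y) + fv (a1,a2,a3,a4,a5) (x, y) = y * (a1 + (a3 + a4) * (y::'a))"
proof -
  have "fv (a1,a2,a3,a4,a5) (x + y, y) + fv (a1,a2,a3,a4,a5) (x, y)
     = y * (a1 + (a3 + a4) * y) + 2 * (a1*x + a2*y + a3*x^2 + a3*x*y + a4*x*y + a5*y^2)"
    unfolding fv_def by (simp add: algebra_simps power2_eq_square)
  thus ?thesis using two by simp
qed

lemma vanish:
  fixes xi :: "'a::{finite,field}"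
  assumes two: "(2::'a) = 0"
    and C1: "C1 = {(x, y). x^2 + x*y + xi*y^2 = 1}"
    and cardC: "card C1 \<ge> 5"
    and van: "\<forall>P\<in>C1. fv (a1,a2,a3,a4,a5) P = 0"
  shows "a1 = 0 \<and> a2 = 0 \<and> a3 = 0 \<and> a4 = 0 \<and> a5 = 0"
proof -
  note m = c2_minus[OF two]
  note aa = c2_add_self[OF two]
  have partner: "(x + y, y) \<in> C1" if "(x, y) \<in> C1" for x y
  proof -
    have "(x+y)^2 + (x+y)*y + xi*y^2 = (x^2 + x*y + xi*y^2) + 2*(x*y + y^2)"
      by (simp add: algebra_simps power2_eq_square)
    thus ?thesis using that two C1 by simp
  qed
  have one: "(1, 0) \<in> C1" using C1 by simp
  have y0: "x = 1" if "(x, 0) \<in> C1" for x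
  proof -
    have "x^2 = 1" using that C1 by simp
    hence "(x + 1)^2 = 0" using c2_sq[OF two, of x 1] aa by simp
    hence "x + 1 = 0" by simp
    thus ?thesis using m by (metis add_eq_0_iff)
  qed
  define C1' where "C1' = C1 - {(1,0)}"
  have fin: "finite C1'" by simp
  have cC1': "card C1' \<ge> 4" unfolding C1'_def using cardC one by simp
  hence "C1' \<noteq> {}" by auto
  then obtain P1 where "P1 \<in> C1'" by blast
  then obtain x1 y1 where p1: "(x1, y1) \<in> C1" and y1: "y1 \<noteq> 0"
    unfolding C1'_def using y0 by (cases P1) auto
  have fib: "{P\<in>C1'. snd P = y1} \<subseteq> {(x1, y1), (x1 + y1, y1)}"
  proof
    fix P assume P: "P \<in> {P\<in>C1'. snd P = y1}"
    then obtain x where Px: "P = (x, y1)" and "(x, y1) \<in> C1" unfolding C1'_def by (cases P) auto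
    hence e: "x^2 + x*y1 + xi*y1^2 = x1^2 + x1*y1 + xi*y1^2" using p1 C1 by simp
    have "(x + x1) * (x + x1 + y1) = (x^2 + x*y1 + xi*y1^2) + (x1^2 + x1*y1 + xi*y1^2)
           + 2 * (x*x1) - 2 * (xi*y1^2)"
      by (simp add: algebra_simps power2_eq_square)
    also have "\<dots> = 0" unfolding e by (simp only: aa two mult_zero_left add_0 diff_zero)
    finally have "x + x1 = 0 \<or> x + x1 + y1 = 0" by simp
    hence "x = x1 \<or> x = x1 + y1" using m by (metis add_eq_0_iff add.commute add.left_commute)
    thus "P \<in> {(x1, y1), (x1 + y1, y1)}" using Px by auto
  qed
  have "\<exists>P\<in>C1'. snd P \<noteq> y1"
  proof (rule ccontr)
    assume "\<not> ?thesis"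
    hence "C1' \<subseteq> {(x1, y1), (x1 + y1, y1)}" using fib by auto
    hence "card C1' \<le> card {(x1, y1), (x1 + y1, y1)}" by (rule card_mono[rotated]) simp
    moreover have "card {(x1, y1), (x1 + y1, y1)} \<le> 2" by (cases "x1 = x1 + y1") auto
    ultimately have "card C1' \<le> 2" by linarith
    thus False using cC1' by simp
  qed
  then obtain P2 where P2: "P2 \<in> C1'" "snd P2 \<noteq> y1" by blast
  obtain x2 y2 where P2e: "P2 = (x2, y2)" by (cases P2)
  have p2: "(x2, y2) \<in> C1" and y12: "y2 \<noteq> y1" using P2 P2e unfolding C1'_def by auto
  have y2: "y2 \<noteq> 0"
  proof
    assume "y2 = 0"
    hence "x2 = 1" using y0 p2 by simp
    thus False using P2 P2e \<open>y2 = 0\<close> unfolding C1'_def by simp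
  qed
  have lin: "a1 + (a3 + a4) * y = 0" if "(x, y) \<in> C1" "y \<noteq> 0" for x y
  proof -
    have "fv (a1,a2,a3,a4,a5) (x + y, y) + fv (a1,a2,a3,a4,a5) (x, y) = 0"
      using van partner that by simp
    hence "y * (a1 + (a3 + a4) * y) = 0" using fv_shift[OF two] by metis
    thus ?thesis using that by simp
  qed
  have l1: "a1 + (a3 + a4) * y1 = 0" using lin p1 y1 .
  have l2: "a1 + (a3 + a4) * y2 = 0" using lin p2 y2 .
  have "(a3 + a4) * (y1 + y2) = (a1 + (a3 + a4) * y1) + (a1 + (a3 + a4) * y2) - 2 * a1"
    by (simp add: algebra_simps)
  hence "(a3 + a4) * (y1 + y2) = 0" using l1 l2 two by simp
  moreover have "y1 + y2 \<noteq> 0" using y12 m by (metis add_eq_0_iff)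
  ultimately have b0: "a3 + a4 = 0" by simp
  hence a1: "a1 = 0" using l1 by simp
  have "fv (a1,a2,a3,a4,a5) (1, 0) = 0" using van one by simp
  hence a3: "a3 = 0" using a1 unfolding fv_def by simp
  hence a4: "a4 = 0" using b0 by simp
  have quad: "a2 + a5 * y = 0" if "(x, y) \<in> C1" "y \<noteq> 0" for x y
  proof -
    have "fv (a1,a2,a3,a4,a5) (x, y) = 0" using van that by simp
    hence "y * (a2 + a5 * y) = 0" unfolding fv_def using a1 a3 a4
      by (simp add: algebra_simps power2_eq_square)
    thus ?thesis using that by simp
  qed
  have q1: "a2 + a5 * y1 = 0" using quad p1 y1 .
  have q2: "a2 + a5 * y2 = 0" using quad p2 y2 .
  have "a5 * (y1 + y2) = (a2 + a5 * y1) + (a2 + a5 * y2) - 2 * a2"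
    by (simp add: algebra_simps)
  hence "a5 * (y1 + y2) = 0" using q1 q2 two by simp
  hence a5: "a5 = 0" using \<open>y1 + y2 \<noteq> 0\<close> by simp
  hence "a2 = 0" using q1 by simp
  thus ?thesis using a1 a3 a4 a5 by simp
qed

lemma quad_roots:
  fixes a b c :: "'a::field"
  assumes "a \<noteq> 0"
  shows "card {x. a*x^2 + b*x + c = 0} \<le> 2"
proof -
  have pe: "poly [:c, b, a:] x = a*x^2 + b*x + c" for x
    by (simp add: algebra_simps power2_eq_square)
  have e: "{x. a*x^2 + b*x + c = 0} = {x. poly [:c, b, a:] x = 0}"
    by (simp only: pe)
  have "[:c, b, a:] \<noteq> 0" using assms by simp
  hence "card {x. poly [:c, b, a:] x = 0} \<le> degree [:c, b, a:]" by (rule card_poly_roots_bound)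
  also have "degree [:c, b, a:] = 2" using assms by simp
  finally show ?thesis unfolding e .
qed

lemma lin_roots:
  fixes b c :: "'a::field"
  assumes "b \<noteq> 0"
  shows "card {x. b*x + c = 0} \<le> 1"
proof -
  have "{x. b*x + c = 0} \<subseteq> {- c / b}"
  proof
    fix x assume "x \<in> {x. b*x + c = 0}"
    hence "b*x = -c" by (simp add: eq_neg_iff_add_eq_0)
    hence "x = -c / b" using assms by (metis nonzero_mult_div_cancel_left)
    thus "x \<in> {- c / b}" by simp
  qed
  hence "card {x. b*x + c = 0} \<le> card {- c / b}" by (rule card_mono[rotated]) simp
  thus ?thesis by simp
qed

lemma zeros_card:
  fixes a1 a2 a3 a4 a5 :: "'a::{finite,field}"
  assumes nz: "\<not> (a1 = 0 \<and> a2 = 0 \<and> a3 = 0 \<and> a4 = 0 \<and> a5 = 0)"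
  shows "card {P. fv (a1,a2,a3,a4,a5) P = 0} \<le> 2 * CARD('a)"
proof -
  define F where "F y = {x. fv (a1,a2,a3,a4,a5) (x,y) = 0}" for y
  have fvxy: "fv (a1,a2,a3,a4,a5) (x,y) = a3*x^2 + (a1+a4*y)*x + (a2*y+a5*y^2)" for x y
    by (simp add: fv_def algebra_simps)
  have "{P. fv (a1,a2,a3,a4,a5) P = 0} = (\<lambda>(y,x). (x,y)) ` (SIGMA y:UNIV. F y)"
    unfolding F_def by (auto simp: image_iff)
  moreover have "inj_on (\<lambda>(y,x). (x,y)) (SIGMA y:UNIV. F y)" by (auto simp: inj_on_def)
  ultimately have sig: "card {P. fv (a1,a2,a3,a4,a5) P = 0} = (\<Sum>y\<in>UNIV. card (F y))"
    by (simp add: card_image card_SigmaI)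
  have qb: "card (F y) \<le> CARD('a)" for y by (rule card_mono) auto
  have "(\<Sum>y\<in>UNIV. card (F y)) \<le> 2 * CARD('a)"
  proof (cases "a3 = 0")
    case False
    have "card (F y) \<le> 2" for y unfolding F_def fvxy using quad_roots[OF False, of "a1+a4*y" "a2*y+a5*y^2"] by simp
    hence "(\<Sum>y\<in>UNIV. card (F y)) \<le> (\<Sum>y\<in>(UNIV::'a set). 2)" by (intro sum_mono) auto
    thus ?thesis by (simp add: mult.commute)
  next
    case a3: True
    show ?thesis
    proof (cases "a4 = 0 \<and> a1 = 0")
      case False
      define y0 where "y0 = - a1 / a4"
      have "card (F y) \<le> 1 + (if y = y0 then CARD('a) else 0)" for y
      proof (cases "a1 + a4*y = 0")
        case True
        have a4n: "a4 \<noteq> 0" using True False by auto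
        have "a4*y = -a1" using True by (simp add: eq_neg_iff_add_eq_0 add.commute)
        hence "y = y0" unfolding y0_def using a4n by (metis nonzero_mult_div_cancel_left)
        thus ?thesis using qb[of y] by simp
      next
        case nz1: False
        have "F y = {x. (a1+a4*y)*x + (a2*y+a5*y^2) = 0}" unfolding F_def fvxy using a3 by simp
        hence "card (F y) \<le> 1" using lin_roots[OF nz1] by simp
        thus ?thesis by simp
      qed
      hence "(\<Sum>y\<in>UNIV. card (F y)) \<le> (\<Sum>y\<in>UNIV. 1 + (if y = y0 then CARD('a) else 0))"
        by (intro sum_mono) auto
      also have "\<dots> = (\<Sum>y\<in>(UNIV::'a set). (1::nat)) + (\<Sum>y\<in>UNIV. if y = y0 then CARD('a) else 0)"
        by (simp only: sum.distrib)
      also have "\<dots> = CARD('a) + CARD('a)" by simp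
      finally show ?thesis by simp
    next
      case True
      hence a4: "a4 = 0" and a1: "a1 = 0" by auto
      have nz2: "\<not> (a2 = 0 \<and> a5 = 0)" using nz a1 a3 a4 by auto
      define y0 where "y0 = - a2 / a5"
      have "card (F y) \<le> (if y = 0 then CARD('a) else 0) + (if y = y0 then CARD('a) else 0)" for y
      proof (cases "a2*y + a5*y^2 = 0")
        case True
        hence "y * (a2 + a5 * y) = 0" by (simp add: algebra_simps power2_eq_square)
        hence "y = 0 \<or> a2 + a5 * y = 0" by simp
        moreover have "y = y0" if h: "a2 + a5 * y = 0"
        proof -
          have a5n: "a5 \<noteq> 0" using h nz2 by auto
          have "a5*y = -a2" using h by (simp add: eq_neg_iff_add_eq_0 add.commute)
          thus "y = y0" unfolding y0_def using a5n by (metis nonzero_mult_div_cancel_left)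
        qed
        ultimately have "y = 0 \<or> y = y0" by blast
        thus ?thesis using qb[of y] by auto
      next
        case False
        have "F y = {x. a2*y + a5*y^2 = 0}" unfolding F_def fvxy using a1 a3 a4 by simp
        hence "F y = {}" using False by simp
        thus ?thesis by simp
      qed
      hence "(\<Sum>y\<in>UNIV. card (F y)) \<le> (\<Sum>y\<in>UNIV. (if y = 0 then CARD('a) else 0) + (if y = y0 then CARD('a) else 0))"
        by (intro sum_mono) auto
      also have "\<dots> = (\<Sum>y\<in>UNIV. if y = (0::'a) then CARD('a) else 0) + (\<Sum>y\<in>UNIV. if y = y0 then CARD('a) else 0)"
        by (simp only: sum.distrib)
      also have "\<dots> = CARD('a) + CARD('a)" by simp
      finally show ?thesis by simp
    qed
  qed
  thus ?thesis using sig by simp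
qed

theorem corollary2:
  fixes n :: nat and xi :: "'a::{finite, field}"
  assumes q: "CARD('a) = 2 ^ (4 * n + 2)"
    and xi: "xi^2 + xi + 1 = 0"
  shows "card (Omega_star (2 ^ (2 * n + 1)) xi) = (2 ^ (2 * n + 1) - 1) * (CARD('a) + 1)
       \<and> card (functional_code (Omega_star (2 ^ (2 * n + 1)) xi)) = CARD('a) ^ 5
       \<and> int (min_distance (Omega_star (2 ^ (2 * n + 1)) xi)
                (functional_code (Omega_star (2 ^ (2 * n + 1)) xi)))
           \<ge> int (card (Omega_star (2 ^ (2 * n + 1)) xi))
              - (2 * int CARD('a) + 2 + 20 * 2 ^ (2 * n + 1))"
proof -
  define s :: nat where "s = 2 ^ (2 * n + 1)"
  define \<Omega> where "\<Omega> = Omega_star s xi"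
  define K where "K = (subfield_of_order s :: 'a set)"
  have two: "(2::'a) = 0" using char2[OF q] .
  have e1: "4*n+2 = (2*n+1) + (2*n+1)" by simp
  have qs: "CARD('a) = 2^(2*n+1) * 2^(2*n+1)" unfolding q e1 by (rule power_add)
  have cK: "card K = s"
    using subfield_card[OF two _ qs] unfolding K_def subfield_of_order_def s_def by simp
  have s1: "s \<ge> 1" unfolding s_def by simp
  have K0: "0 \<in> K" unfolding K_def subfield_of_order_def using s1 by simp
  have K1: "1 \<in> K" unfolding K_def subfield_of_order_def by simp
  have an: "\<And>x y. x^2 + x*y + xi*y^2 = 0 \<Longrightarrow> x = 0 \<and> y = 0"
    using aniso[OF two q xi] by blast
  define C where "C w = {(x, y). x^2 + x*y + xi*y^2 = w}" for w :: 'a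
  have Cc: "card (C w) = CARD('a) + 1" if "w \<noteq> 0" for w
    unfolding C_def using conic_card[OF two an that] .
  have Om: "\<Omega> = (\<Union>w\<in>K - {0}. C w)" unfolding \<Omega>_def Omega_star_def C_def K_def ..
  have disj: "\<forall>i\<in>K - {0}. \<forall>j\<in>K - {0}. i \<noteq> j \<longrightarrow> C i \<inter> C j = {}"
    unfolding C_def by blast
  have "card \<Omega> = (\<Sum>w\<in>K - {0}. card (C w))"
    unfolding Om by (rule card_UN_disjoint[OF _ _ disj]) simp_all
  also have "\<dots> = (\<Sum>w\<in>K - {0}. CARD('a) + 1)" by (rule sum.cong) (simp_all add: Cc)
  also have "\<dots> = (s - 1) * (CARD('a) + 1)" using cK K0 by simp
  finally have part1: "card \<Omega> = (s - 1) * (CARD('a) + 1)" .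

  define cw where "cw a = (\<lambda>P. if P \<in> \<Omega> then fv a P else 0)" for a :: "'a \<times> 'a \<times> 'a \<times> 'a \<times> 'a"
  have fc: "functional_code \<Omega> = range cw"
  proof
    show "functional_code \<Omega> \<subseteq> range cw"
    proof
      fix w assume "w \<in> functional_code \<Omega>"
      then obtain a1 a2 a3 a4 a5 where "w = (\<lambda>P. if P \<in> \<Omega> then
              a1 * fst P + a2 * snd P + a3 * (fst P)^2 + a4 * (fst P * snd P) + a5 * (snd P)^2
            else 0)" unfolding functional_code_def by blast
      hence "w = cw (a1,a2,a3,a4,a5)" by (simp add: cw_def fv_def fun_eq_iff)
      thus "w \<in> range cw" by blast
    qed
  next
    show "range cw \<subseteq> functional_code \<Omega>"
    proof
      fix w assume "w \<in> range cw"
      then obtain a where wa: "w = cw a" by blast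
      obtain a1 a2 a3 a4 a5 where "a = (a1,a2,a3,a4,a5)" by (cases a) auto
      hence "w = cw (a1,a2,a3,a4,a5)" using wa by simp
      moreover have "cw (a1,a2,a3,a4,a5) = (\<lambda>P. if P \<in> \<Omega> then
              a1 * fst P + a2 * snd P + a3 * (fst P)^2 + a4 * (fst P * snd P) + a5 * (snd P)^2
            else 0)" by (simp add: cw_def fv_def fun_eq_iff)
      ultimately show "w \<in> functional_code \<Omega>" unfolding functional_code_def by blast
    qed
  qed
  define C1 where "C1 = C 1"
  have "C 1 \<subseteq> (\<Union>w\<in>K - {0}. C w)" by (rule UN_upper) (simp add: K1)
  hence C1O: "C1 \<subseteq> \<Omega>" unfolding C1_def Om .
  have "(2::nat)^2 \<le> 2^(4*n+2)" by (rule power_increasing) simp_all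
  hence h24: "(2::nat)^2 \<le> CARD('a)" unfolding q .
  have "(2::nat)^2 = 4" by simp
  hence q4: "CARD('a) \<ge> 4" using h24 by linarith
  have cC1: "card C1 \<ge> 5" unfolding C1_def using Cc[of 1] q4 by simp
  have C1e: "C1 = {(x, y). x^2 + x*y + xi*y^2 = 1}" unfolding C1_def C_def ..
  have fv_sub: "fv (a1-b1,a2-b2,a3-b3,a4-b4,a5-b5) P = fv (a1,a2,a3,a4,a5) P - fv (b1,b2,b3,b4,b5) P"
    for a1 a2 a3 a4 a5 b1 b2 b3 b4 b5 P by (simp add: fv_def algebra_simps)
  have "inj cw"
  proof (rule injI)
    fix a b assume ab: "cw a = cw b"
    obtain a1 a2 a3 a4 a5 where a: "a = (a1,a2,a3,a4,a5)" by (cases a) auto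
    obtain b1 b2 b3 b4 b5 where b: "b = (b1,b2,b3,b4,b5)" by (cases b) auto
    have "\<forall>P\<in>C1. fv (a1-b1,a2-b2,a3-b3,a4-b4,a5-b5) P = 0"
    proof
      fix P assume "P \<in> C1"
      hence "P \<in> \<Omega>" using C1O by blast
      hence "fv a P = fv b P" using fun_cong[OF ab, of P] unfolding cw_def by simp
      thus "fv (a1-b1,a2-b2,a3-b3,a4-b4,a5-b5) P = 0" unfolding fv_sub a b by simp
    qed
    from vanish[OF two C1e cC1 this] show "a = b" unfolding a b by simp
  qed
  hence part2: "card (functional_code \<Omega>) = CARD('a) ^ 5"
    unfolding fc by (simp add: card_image card_prod eval_nat_numeral)

  define W where "W = functional_code \<Omega> - {\<lambda>_. 0}"
  have finW: "finite W" unfolding W_def fc by simp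
  have one: "(1, 0) \<in> \<Omega>" using C1O C1e by auto
  have "cw (1,0,0,0,0) (1,0) = 1" using one unfolding cw_def fv_def by simp
  hence "cw (1,0,0,0,0) \<noteq> (\<lambda>_. 0)" by (metis zero_neq_one)
  hence "cw (1,0,0,0,0) \<in> W" unfolding W_def fc by blast
  hence Wne: "W \<noteq> {}" by blast
  have md: "min_distance \<Omega> (functional_code \<Omega>) = Min (hweight \<Omega> ` W)"
    unfolding min_distance_def W_def ..
  have "Min (hweight \<Omega> ` W) \<in> hweight \<Omega> ` W" using finW Wne by (intro Min_in) auto
  then obtain w where wW: "w \<in> W" and mdw: "min_distance \<Omega> (functional_code \<Omega>) = hweight \<Omega> w"
    unfolding md by blast
  obtain a where wa0: "w = cw a" using wW unfolding W_def fc by blast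
  obtain a1 a2 a3 a4 a5 where "a = (a1,a2,a3,a4,a5)" by (cases a) auto
  hence wa: "w = cw (a1,a2,a3,a4,a5)" using wa0 by simp
  have anz: "\<not> (a1 = 0 \<and> a2 = 0 \<and> a3 = 0 \<and> a4 = 0 \<and> a5 = 0)"
  proof
    assume "a1 = 0 \<and> a2 = 0 \<and> a3 = 0 \<and> a4 = 0 \<and> a5 = 0"
    hence "w = (\<lambda>_. 0)" unfolding wa cw_def fv_def by auto
    thus False using wW unfolding W_def by simp
  qed
  have hw: "hweight \<Omega> w = card {P\<in>\<Omega>. fv (a1,a2,a3,a4,a5) P \<noteq> 0}"
    unfolding hweight_def wa by (rule arg_cong[where f=card]) (auto simp: cw_def)
  have "\<Omega> \<subseteq> {P\<in>\<Omega>. fv (a1,a2,a3,a4,a5) P \<noteq> 0} \<union> {P. fv (a1,a2,a3,a4,a5) P = 0}" by auto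
  hence "card \<Omega> \<le> card ({P\<in>\<Omega>. fv (a1,a2,a3,a4,a5) P \<noteq> 0} \<union> {P. fv (a1,a2,a3,a4,a5) P = 0})"
    by (rule card_mono[rotated]) simp
  also have "\<dots> \<le> card {P\<in>\<Omega>. fv (a1,a2,a3,a4,a5) P \<noteq> 0} + card {P. fv (a1,a2,a3,a4,a5) P = 0}"
    by (rule card_Un_le)
  also have "\<dots> \<le> hweight \<Omega> w + 2 * CARD('a)" using zeros_card[OF anz] hw by simp
  finally have "card \<Omega> \<le> min_distance \<Omega> (functional_code \<Omega>) + 2 * CARD('a)" using mdw by simp
  hence i1: "int (card \<Omega>) \<le> int (min_distance \<Omega> (functional_code \<Omega>)) + 2 * int CARD('a)"
    by linarith
  have i2: "(0::int) \<le> 20 * 2 ^ (2 * n + 1)" by simp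
  have part3: "int (min_distance \<Omega> (functional_code \<Omega>)) \<ge> int (card \<Omega>) - (2 * int CARD('a) + 2 + 20 * 2 ^ (2 * n + 1))"
    using i1 i2 by linarith
  show ?thesis using part1 part2 part3 unfolding \<Omega>_def s_def by simp
qed

end
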